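(* Let $p$ be a prime, $q=p^r$, and let $l$ be an integer with $0\le l\le 2r-1$. Every root of the equation $X^{1+p^l}+1=0$ in $\mathrm{GF}(q^2)$ lies in $\mathrm{GF}(q)$ (equivalently, $\alpha^{1+p^l}+\beta^{1+p^l}\neq0$ for every basis $\{\alpha,\beta\}$ of $\mathrm{GF}(q^2)$ over $\mathrm{GF}(q)$) if and only if either (i) $p=2$ and $\gcd(2^l+1,2^r+1)=1$; or (ii) $p$ is odd and at least one of the following holds: (a) there is a power of two which divides $p^r-1$ but does not divide $p^l+1$, and $\gcd(p^l+1,p^r+1)=2$; (b) every power of two dividing $p^{2r}-1$ divides $p^l+1$. *)

theory Defs
  imports "HOL-Computational_Algebra.Primes" "HOL-Library.Cardinality"
begin

definition is_subfield :: "'a::field set \<Rightarrow> bool" where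
  "is_subfield K \<longleftrightarrow> 0 \<in> K \<and> 1 \<in> K \<and>
     (\<forall>x\<in>K. \<forall>y\<in>K. x + y \<in> K \<and> x * y \<in> K) \<and>
     (\<forall>x\<in>K. - x \<in> K) \<and> (\<forall>x\<in>K. x \<noteq> 0 \<longrightarrow> inverse x \<in> K)"

end

theory Submission imports Defs "Jordan_Normal_Form.VS_Connect" "HOL-Algebra.Multiplicative_Group"
begin

lemma class_pow: "(a::'a::field) [^]\<^bsub>(class_ring::'a ring)\<^esub> (i::nat) = a ^ i"
  by (induction i) (auto simp: nat_pow_Suc mult.commute)

lemma gen_exists:
  "\<exists>g::'a::{field,finite}. \<forall>x. x \<noteq> 0 \<longrightarrow> (\<exists>i::nat. x = g ^ i)"
proof -
  have "finite (carrier (class_ring::'a ring))" by simp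
  from field.finite_field_mult_group_has_gen[OF class_field this]
  obtain a where "a \<in> carrier (mult_of (class_ring::'a ring))"
    and "carrier (mult_of (class_ring::'a ring)) = {a [^]\<^bsub>(class_ring::'a ring)\<^esub> i |i::nat. i \<in> UNIV}"
    by blast
  hence eq: "UNIV - {0} = {a ^ i |i::nat. i \<in> UNIV}" by (auto simp: carrier_mult_of class_pow)
  hence "\<forall>x. x \<noteq> 0 \<longrightarrow> (\<exists>i::nat. x = a ^ i)" 
  proof (intro allI impI)
    fix x :: 'a assume "x \<noteq> 0"
    hence "x \<in> UNIV - {0}" by simp
    hence "x \<in> {a ^ i |i::nat. i \<in> UNIV}" using eq by simp
    thus "\<exists>i::nat. x = a ^ i" by blast
  qed
  thus ?thesis by blast
qed


lemma subfield_fermat: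
  fixes K :: "'a::field set"
  assumes "is_subfield K" "finite K" "a \<in> K" "a \<noteq> 0"
  shows "a ^ (card K - 1) = 1"
proof -
  let ?K = "K - {0}"
  have fin: "finite ?K" using assms(2) by simp
  have inj: "inj_on ((*) a) ?K" using assms(4) by (auto simp: inj_on_def)
  have sub: "(*) a ` ?K \<subseteq> ?K" using assms unfolding is_subfield_def by auto
  have img: "(*) a ` ?K = ?K"
    using card_image[OF inj] sub fin by (metis card_subset_eq)
  have "prod id ?K = prod id ((*) a ` ?K)" using img by simp
  also have "\<dots> = prod ((*) a) ?K" by (simp add: prod.reindex[OF inj])
  also have "\<dots> = a ^ card ?K * prod id ?K" by (simp add: prod.distrib)
  finally have eq: "prod id ?K = a ^ card ?K * prod id ?K" .
  have "prod id ?K \<noteq> 0" using fin by simp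
  hence "a ^ card ?K = 1" using eq by (metis mult_cancel_right1)
  moreover have "card ?K = card K - 1" using assms unfolding is_subfield_def by simp
  ultimately show ?thesis by simp
qed

lemma char_card: "of_nat CARD('a::{field,finite}) = (0::'a)"
proof -
  have inj: "inj (\<lambda>y::'a. y + 1)" by (auto simp: inj_def)
  have surj: "range (\<lambda>y::'a. y + 1) = UNIV" by (metis surjI diff_add_cancel)
  have "sum id (UNIV::'a set) = sum id (range (\<lambda>y::'a. y + 1))" using surj by simp
  also have "\<dots> = sum (id \<circ> (\<lambda>y. y + 1)) (UNIV::'a set)" by (rule sum.reindex[OF inj])
  also have "\<dots> = sum (\<lambda>y. y + 1) (UNIV::'a set)" by (simp only: comp_def id_def)
  also have "\<dots> = sum (\<lambda>y. y) (UNIV::'a set) + sum (\<lambda>y. 1) (UNIV::'a set)" by (rule sum.distrib)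
  also have "\<dots> = sum id (UNIV::'a set) + of_nat CARD('a)" by (simp add: id_def)
  finally show ?thesis by simp
qed



lemma pow2_dvd_odd: "odd (c::nat) \<Longrightarrow> 2^k dvd b*c \<longleftrightarrow> 2^k dvd b"
  by (rule coprime_dvd_mult_left_iff) simp

lemma exact_pow2: "(x::nat) > 0 \<Longrightarrow> \<exists>k. 2^k dvd x \<and> \<not> 2^Suc k dvd x"
proof (induction x rule: less_induct)
  case (less x)
  show ?case
  proof (cases "even x")
    case True
    then obtain y where y: "x = 2*y" by blast
    with less.prems have "y > 0" "y < x" by auto
    with less.IH obtain k where "2^k dvd y" "\<not> 2^Suc k dvd y" by blast
    with y have "2^Suc k dvd x" "\<not> 2^Suc (Suc k) dvd x" by auto
    thus ?thesis by blast
  next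
    case False
    hence "\<not> 2^Suc 0 dvd x" by simp
    thus ?thesis by (intro exI[of _ 0]) simp
  qed
qed

lemma dvd2_odd: "(x::nat) dvd 2 \<Longrightarrow> odd x \<Longrightarrow> x = 1"
proof -
  assume a: "x dvd 2" "odd x"
  hence "x \<le> 2" by (intro dvd_imp_le) auto
  moreover have "x \<noteq> 0" "x \<noteq> 2" using a by auto
  ultimately show "x = 1" by linarith
qed

lemma coprime_pm: "odd (q::nat) \<Longrightarrow> gcd (q - 1) (q + 1) dvd 2"
proof -
  assume "odd q"
  have "gcd (q - 1) (q + 1) dvd (q + 1) - (q - 1)" by (rule dvd_diff_nat[OF gcd_dvd2 gcd_dvd1])
  moreover have "(q + 1) - (q - 1) = 2" using \<open>odd q\<close> by (cases q) auto
  ultimately show ?thesis by simp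
qed

lemma nt_even:
  fixes q n :: nat
  assumes "even q" "q \<ge> 2"
  shows "(\<forall>e. (e*n) mod (q^2 - 1) = 0 \<longrightarrow> (q+1) dvd e) \<longleftrightarrow> gcd n (q+1) = 1"
proof -
  have N: "q^2 - 1 = (q-1)*(q+1)" using assms by (simp add: power2_eq_square algebra_simps)
  have cop: "coprime (q+1) (q-1)"
  proof -
    have "gcd (q+1) (q-1) dvd (q + 1) - (q - 1)" by (rule dvd_diff_nat[OF gcd_dvd1 gcd_dvd2])
    moreover have "(q + 1) - (q - 1) = 2" using assms by auto
    ultimately have "gcd (q+1) (q-1) dvd 2" by simp
    moreover have "odd (gcd (q+1) (q-1))" using assms by (metis dvd_add_right_iff dvd_trans even_add gcd_dvd1 odd_one)
    ultimately have "gcd (q+1) (q-1) = 1"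
      by (rule dvd2_odd)
    thus ?thesis by (simp add: coprime_iff_gcd_eq_1)
  qed
  show ?thesis
  proof
    assume P: "\<forall>e. (e*n) mod (q^2 - 1) = 0 \<longrightarrow> (q+1) dvd e"
    define d where "d = gcd n (q+1)"
    have dpos: "d > 0" unfolding d_def by simp
    define e where "e = (q-1) * ((q+1) div d)"
    obtain a b where ab: "n = d*a" "q+1 = d*b" unfolding d_def by (meson dvd_def gcd_dvd1 gcd_dvd2)
    have bq: "(q+1) div d = b" using ab dpos by simp
    hence "e * n = (q-1)*(q+1) * a" unfolding e_def using ab by (simp add: algebra_simps)
    hence "(e*n) mod (q^2 - 1) = 0" using N by simp
    hence "(q+1) dvd e" by (rule P[rule_format])
    hence "(q+1) dvd (q-1) * ((q+1) div d)" unfolding e_def .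
    hence "(q+1) dvd ((q+1) div d)" using cop coprime_dvd_mult_right_iff by blast
    moreover have "(q+1) div d > 0" using ab bq by (cases b) auto
    ultimately have "q + 1 \<le> (q+1) div d" by (simp add: dvd_imp_le)
    hence "d \<le> 1"
    proof (rule contrapos_pp)
      assume "\<not> d \<le> 1"
      hence "(q+1) div d < q+1" by (intro div_less_dividend) auto
      thus "\<not> q + 1 \<le> (q+1) div d" by linarith
    qed
    hence "d = 1" using dpos by linarith
    thus "gcd n (q+1) = 1" unfolding d_def .
  next
    assume g: "gcd n (q+1) = 1"
    show "\<forall>e. (e*n) mod (q^2 - 1) = 0 \<longrightarrow> (q+1) dvd e"
    proof (intro allI impI)
      fix e assume "(e*n) mod (q^2 - 1) = 0"
      hence "(q+1) dvd e*n" using N by (metis dvd_mult_right mod_0_imp_dvd mult.commute)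
      moreover have "coprime (q+1) n" using g by (simp add: coprime_iff_gcd_eq_1 gcd.commute)
      ultimately show "(q+1) dvd e" using coprime_dvd_mult_left_iff by blast
    qed
  qed
qed

lemma nt_odd_core:
  fixes h j n :: nat
  assumes "j > 0" "h = j + 1" "even n" "n > 0"
  defines "M \<equiv> 2*h*j"
  shows "(\<forall>e. (\<exists>t. e*n = M*(2*t+1)) \<longrightarrow> (2*h) dvd e) \<longleftrightarrow>
     (((\<exists>k. 2^k dvd 2*j \<and> \<not> 2^k dvd n) \<and> gcd n (2*h) = 2) \<or> (\<forall>k. 2^k dvd 2*M \<longrightarrow> 2^k dvd n))"
proof -
  have Mpos: "M > 0" using assms by simp
  have cophj: "coprime h j" using assms(2) by simp
  have gpm: "gcd (2*j) (2*h) = 2"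
    using cophj by (simp add: gcd_mult_distrib_nat[symmetric] coprime_iff_gcd_eq_1 gcd.commute)
  obtain n' where n': "n = 2*n'" using assms by blast
  have n'pos: "n' > 0" using n' assms by simp
  show ?thesis
  proof
    assume P: "\<forall>e. (\<exists>t. e*n = M*(2*t+1)) \<longrightarrow> (2*h) dvd e"
    show "((\<exists>k. 2^k dvd 2*j \<and> \<not> 2^k dvd n) \<and> gcd n (2*h) = 2) \<or> (\<forall>k. 2^k dvd 2*M \<longrightarrow> 2^k dvd n)"
    proof (cases "\<forall>k. 2^k dvd 2*M \<longrightarrow> 2^k dvd n")
      case True thus ?thesis by blast
    next
      case False
      then obtain k0 where k0: "2^k0 dvd 2*M" "\<not> 2^k0 dvd n" by blast
      define d where "d = gcd n (2*M)"
      have dpos: "d > 0" unfolding d_def using assms by simp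
      obtain s where s: "2*M = d*s" unfolding d_def by (meson dvd_def gcd_dvd2)
      obtain a where a: "n = d*a" unfolding d_def by (meson dvd_def gcd_dvd1)
      have "even s"
      proof (rule ccontr)
        assume "odd s"
        hence "2^k0 dvd d" using k0(1) s pow2_dvd_odd by metis
        hence "2^k0 dvd n" unfolding d_def using dvd_trans gcd_dvd1 by blast
        with k0 show False by simp
      qed
      then obtain s' where s': "s = 2*s'" by blast
      have Md: "M = d*s'" using s s' by simp
      obtain x y where xy: "n * x = (2*M) * y + d" unfolding d_def using bezout_nat assms by blast
      define e0 where "e0 = x * s'"
      have "e0 * n = s'*(n*x)" by (simp add: e0_def algebra_simps)
      also have "\<dots> = s'*(2*M*y + d)" using xy by simp
      also have "\<dots> = M * (2*(y*s') + 1)" using Md by (simp add: algebra_simps)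
      finally have "e0 * n = M * (2*(y*s') + 1)" .
      hence e0sol: "\<exists>t. e0*n = M*(2*t+1)" by blast
      hence "(2*h) dvd e0" using P by blast
      then obtain f where f: "e0 = 2*h*f" by blast
      obtain t0 where t0: "e0*n = M*(2*t0+1)" using e0sol by blast
      have fn: "f*n = j*(2*t0+1)"
      proof -
        have "(2*h)*(f*n) = (2*h)*(j*(2*t0+1))" using t0 f unfolding M_def by (simp add: algebra_simps)
        moreover have "2*h \<noteq> 0" using assms by simp
        ultimately show ?thesis using mult_left_cancel by blast
      qed
      have A: "\<exists>k. 2^k dvd 2*j \<and> \<not> 2^k dvd n"
      proof -
        obtain k1 where k1: "2^k1 dvd j" "\<not> 2^Suc k1 dvd j" using exact_pow2 assms by blast
        have "2^Suc k1 dvd 2*j" using k1 by simp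
        moreover have "\<not> 2^Suc k1 dvd n"
        proof
          assume "2^Suc k1 dvd n"
          hence "2^Suc k1 dvd j*(2*t0+1)" using fn by (metis dvd_mult2 mult.commute)
          moreover have "odd (2*t0+1)" by simp
          ultimately have "2^Suc k1 dvd j" using pow2_dvd_odd by blast
          with k1 show False by simp
        qed
        ultimately show ?thesis by blast
      qed
      have "\<exists>t. (e0 + s)*n = M*(2*t+1)"
      proof -
        have "(e0 + s)*n = e0*n + s*n" by (simp add: algebra_simps)
        also have "\<dots> = M*(2*t0+1) + (d*s)*a" using t0 a by (simp add: algebra_simps)
        also have "\<dots> = M*(2*(t0 + a) + 1)" using s by (simp add: algebra_simps)
        finally have "(e0 + s)*n = M*(2*(t0 + a) + 1)" .
        thus ?thesis by blast
      qed
      hence "(2*h) dvd e0 + s" using P by blast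
      hence hs: "(2*h) dvd s" using \<open>(2*h) dvd e0\<close> by (simp add: dvd_add_right_iff)
      then obtain s2 where s2: "s = 2*h*s2" by blast
      have "2*h*(2*j) = 2*h*(d*s2)" using s s2 unfolding M_def by (simp add: algebra_simps)
      moreover have "2*h \<noteq> 0" using assms by simp
      ultimately have "2*j = d*s2" using mult_left_cancel by blast
      hence dj: "d dvd 2*j" by simp
      have "2*h dvd 2*M" unfolding M_def by simp
      hence "gcd n (2*h) dvd d" unfolding d_def by (meson dvd_trans gcd_dvd1 gcd_dvd2 gcd_greatest)
      hence "gcd n (2*h) dvd 2*j" using dj dvd_trans by blast
      hence "gcd n (2*h) dvd gcd (2*j) (2*h)" by simp
      hence "gcd n (2*h) dvd 2" using gpm by simp
      moreover have "2 dvd gcd n (2*h)" using assms by simp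
      ultimately have "gcd n (2*h) = 2" by (simp add: dvd_antisym)
      with A show ?thesis by blast
    qed
  next
    assume R: "((\<exists>k. 2^k dvd 2*j \<and> \<not> 2^k dvd n) \<and> gcd n (2*h) = 2) \<or> (\<forall>k. 2^k dvd 2*M \<longrightarrow> 2^k dvd n)"
    show "\<forall>e. (\<exists>t. e*n = M*(2*t+1)) \<longrightarrow> (2*h) dvd e"
    proof (intro allI impI)
      fix e assume "\<exists>t. e*n = M*(2*t+1)"
      then obtain t where t: "e*n = M*(2*t+1)" by blast
      have oddt: "odd (2*t+1)" by simp
      from R show "(2*h) dvd e"
      proof
        assume B: "\<forall>k. 2^k dvd 2*M \<longrightarrow> 2^k dvd n"
        obtain k where k: "2^k dvd 2*M" "\<not> 2^Suc k dvd 2*M" using exact_pow2 Mpos by (metis mult_pos_pos zero_less_numeral)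
        have "2^k dvd n" using B k by blast
        hence "2^k dvd e*n" by simp
        hence "2^k dvd M*(2*t+1)" using t by simp
        hence "2^k dvd M" using pow2_dvd_odd oddt by blast
        hence "2^Suc k dvd 2*M" by simp
        with k show ?thesis by blast
      next
        assume AG: "(\<exists>k. 2^k dvd 2*j \<and> \<not> 2^k dvd n) \<and> gcd n (2*h) = 2"
        then obtain k where k: "2^k dvd 2*j" "\<not> 2^k dvd n" by blast
        have "2 * gcd n' h = 2" using AG n' by (simp add: gcd_mult_distrib_nat)
        hence "gcd n' h = 1" by simp
        hence cop: "coprime h n'" by (simp add: coprime_iff_gcd_eq_1 gcd.commute)
        have "2*(e*n') = 2*(h*(j*(2*t+1)))" using t n' unfolding M_def by (simp add: algebra_simps)
        hence en': "e*n' = h*(j*(2*t+1))" by simp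
        hence "h dvd e*n'" by simp
        hence "h dvd e" using cop coprime_dvd_mult_left_iff by blast
        then obtain e' where e': "e = h*e'" by blast
        have "h*(e'*n') = h*(j*(2*t+1))" using en' e' by (simp add: algebra_simps)
        moreover have "h \<noteq> 0" using assms by simp
        ultimately have e'n': "e'*n' = j*(2*t+1)" using mult_left_cancel by blast
        have "even e'"
        proof (rule ccontr)
          assume oe: "odd e'"
          have "k \<noteq> 0" using k(2) by (cases k) auto
          then obtain k' where kk: "k = Suc k'" by (cases k) auto
          have "2^k' dvd j" using k(1) kk by simp
          hence "2^k' dvd j*(2*t+1)" by simp
          hence "2^k' dvd n'*e'" using e'n' by (simp add: mult.commute)
          hence "2^k' dvd n'" using pow2_dvd_odd oe by blast
          hence "2^k dvd n" using kk n' by simp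
          with k show False by blast
        qed
        thus ?thesis using e' by auto
      qed
    qed
  qed
qed

lemma mod_half: "(M::nat) > 0 \<Longrightarrow> (x mod (2*M) = M) \<longleftrightarrow> (\<exists>t. x = M*(2*t+1))"
proof
  assume M: "M > 0" and x: "x mod (2*M) = M"
  have "x = 2*M*(x div (2*M)) + x mod (2*M)" by simp
  also have "\<dots> = M*(2*(x div (2*M))+1)" using x by (simp add: algebra_simps)
  finally show "\<exists>t. x = M*(2*t+1)" by blast
next
  assume M: "M > 0" and "\<exists>t. x = M*(2*t+1)"
  then obtain t where "x = M + 2*M*t" by (auto simp: algebra_simps)
  thus "x mod (2*M) = M" using M by simp
qed

lemma nt_odd:
  fixes q n :: nat
  assumes "odd q" "q \<ge> 3" "even n" "n > 0"
  shows "(\<forall>e. (e*n) mod (q^2-1) = ((q^2-1) div 2) mod (q^2-1) \<longrightarrow> (q+1) dvd e) \<longleftrightarrow>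
    (((\<exists>k. 2^k dvd q - 1 \<and> \<not> 2^k dvd n) \<and> gcd n (q+1) = 2) \<or> (\<forall>k. 2^k dvd q^2 - 1 \<longrightarrow> 2^k dvd n))"
proof -
  obtain j where qj0: "q = 2*j+1" using assms(1) oddE by blast
  define h where "h = j + 1"
  define M where "M = 2*h*j"
  have qj: "q - 1 = 2*j" using qj0 by simp
  have qh: "q + 1 = 2*h" unfolding h_def using qj0 by simp
  have jpos: "j > 0" using qj0 assms by linarith
  have N: "q^2 - 1 = 2*M" unfolding M_def h_def using qj0
    by (simp add: power2_eq_square algebra_simps)
  have Mpos: "M > 0" unfolding M_def h_def using jpos by simp
  have "(2*M) div 2 = M" by simp
  hence eq: "(\<forall>e. (e*n) mod (q^2-1) = ((q^2-1) div 2) mod (q^2-1) \<longrightarrow> (q+1) dvd e) \<longleftrightarrow>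
     (\<forall>e. (\<exists>t. e*n = M*(2*t+1)) \<longrightarrow> (2*h) dvd e)"
    using N qh Mpos mod_half[OF Mpos] by simp
  show ?thesis unfolding eq
    using nt_odd_core[of j h n] jpos assms qj qh N unfolding h_def M_def by simp
qed



theorem proposition5:
  fixes p r l :: nat and K :: "'a::{field,finite} set"
  assumes "prime p" and "l < 2 * r"
    and "CARD('a) = (p ^ r) ^ 2"
    and "is_subfield K" and "card K = p ^ r"
  shows "(\<forall>x::'a. x ^ (1 + p ^ l) + 1 = 0 \<longrightarrow> x \<in> K) \<longleftrightarrow>
     ((p = 2 \<and> gcd (2 ^ l + 1) (2 ^ r + 1) = (1::nat)) \<or>
      (odd p \<and>
        (((\<exists>k::nat. 2 ^ k dvd p ^ r - 1 \<and> \<not> 2 ^ k dvd p ^ l + 1)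
            \<and> gcd (p ^ l + 1) (p ^ r + 1) = 2)
         \<or> (\<forall>k::nat. 2 ^ k dvd p ^ (2 * r) - 1 \<longrightarrow> 2 ^ k dvd p ^ l + 1))))"
proof -
  define q where "q = p ^ r"
  define n where "n = 1 + p ^ l"
  define N where "N = q^2 - 1"
  have p2: "p \<ge> 2" using assms(1) prime_ge_2_nat by blast
  have pdiv: "\<forall>m. m dvd p \<longrightarrow> m = 1 \<or> m = p" using assms(1) by (simp add: prime_nat_iff)
  have oddp_gen: "p \<noteq> 2 \<Longrightarrow> odd p"
  proof (rule ccontr)
    assume "p \<noteq> 2" "\<not> odd p"
    hence "2 dvd p" by simp
    hence "(2::nat) = 1 \<or> 2 = p" using pdiv by blast
    thus False using \<open>p \<noteq> 2\<close> by simp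
  qed
  have rpos: "r > 0" using assms(2) by simp
  have q2: "q \<ge> 2" unfolding q_def using p2 rpos
    using power_increasing[of 1 r p] by simp
  have q4: "q^2 \<ge> 4" using power_mono[of 2 q 2] q2 by simp
  have Npos: "N > 0" unfolding N_def using q4 by simp
  have cardU: "CARD('a) = N + 1" unfolding N_def q_def using assms(3) q4 q_def by simp
  have npos: "n > 0" unfolding n_def by simp
  have finK: "finite K" by simp
  have K0: "0 \<in> K" using assms(4) unfolding is_subfield_def by simp
  obtain g :: 'a where gen: "\<And>x. x \<noteq> 0 \<Longrightarrow> \<exists>i::nat. x = g ^ i" using gen_exists by blast
  have subU: "is_subfield (UNIV::'a set)" by (simp add: is_subfield_def)
  have ferm: "\<And>x::'a. x \<noteq> 0 \<Longrightarrow> x ^ N = 1"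
    using subfield_fermat[OF subU] cardU by simp
  have gnz: "g \<noteq> 0"
  proof
    assume g0: "g = 0"
    have "(UNIV::'a set) \<subseteq> {0, 1}"
    proof
      fix x :: 'a
      show "x \<in> {0,1}"
      proof (cases "x = 0")
        case False
        then obtain i where "x = g ^ i" using gen by blast
        thus ?thesis using g0 by (cases i) auto
      qed simp
    qed
    hence "CARD('a) \<le> card {0, 1::'a}" by (intro card_mono) auto
    also have "\<dots> \<le> 2" by (simp add: card_insert_if)
    finally have "CARD('a) \<le> 2" .
    thus False using cardU q4 unfolding N_def by linarith
  qed
  have gN: "g ^ N = 1" using ferm gnz by blast
  have gmod: "\<And>a. g ^ a = g ^ (a mod N)"
  proof -
    fix a
    have "g ^ a = g ^ (N * (a div N) + a mod N)" by simp
    also have "\<dots> = (g ^ N) ^ (a div N) * g ^ (a mod N)" by (simp only: power_add power_mult)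
    finally show "g ^ a = g ^ (a mod N)" using gN by simp
  qed
  have img: "(\<lambda>i. g ^ i) ` {..<N} = UNIV - {0}"
  proof
    show "(\<lambda>i. g ^ i) ` {..<N} \<subseteq> UNIV - {0}" using gnz by auto
    show "UNIV - {0} \<subseteq> (\<lambda>i. g ^ i) ` {..<N}"
    proof
      fix x assume "x \<in> (UNIV::'a set) - {0}"
      then obtain i where "x = g ^ i" using gen by blast
      hence "x = g ^ (i mod N)" using gmod by simp
      moreover have "i mod N \<in> {..<N}" using Npos by simp
      ultimately show "x \<in> (\<lambda>i. g ^ i) ` {..<N}" by blast
    qed
  qed
  have "card (UNIV - {0::'a}) = N" using cardU by (simp add: card_Diff_singleton)
  hence injg: "inj_on (\<lambda>i. g ^ i) {..<N}" using img by (intro eq_card_imp_inj_on) auto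
  have geq: "\<And>a b. g ^ a = g ^ b \<longleftrightarrow> a mod N = b mod N"
  proof -
    fix a b
    have "g ^ a = g ^ b \<longleftrightarrow> g ^ (a mod N) = g ^ (b mod N)" using gmod by metis
    also have "\<dots> \<longleftrightarrow> a mod N = b mod N" using injg Npos by (auto simp: inj_on_def)
    finally show "g ^ a = g ^ b \<longleftrightarrow> a mod N = b mod N" .
  qed
  have Nfac: "N = (q+1)*(q-1)" unfolding N_def by (simp add: power2_eq_square algebra_simps)
  have qN: "(q+1) dvd N" unfolding Nfac by (rule dvd_triv_left)
  have q1pos: "q - 1 > 0" using q2 by simp
  have cardK0: "card (K - {0}) = q - 1" using assms(5) K0 q_def by (simp add: card_Diff_singleton)
  have Kfwd: "\<And>e. g ^ e \<in> K \<Longrightarrow> (q+1) dvd e"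
  proof -
    fix e assume "g ^ e \<in> K"
    moreover have "g ^ e \<noteq> 0" using gnz by simp
    ultimately have "(g ^ e) ^ (q - 1) = 1" using subfield_fermat[OF assms(4) finK] assms(5) q_def by simp
    hence "g ^ (e * (q-1)) = g ^ 0" by (simp add: power_mult)
    hence "(e * (q-1)) mod N = 0" using geq[of "e * (q-1)" 0] by simp
    hence "(q+1)*(q-1) dvd e * (q-1)" using Nfac by (simp add: mod_eq_0_iff_dvd)
    hence "(q-1)*(q+1) dvd (q-1)*e" by (simp only: mult.commute)
    thus "(q+1) dvd e" using nat_mult_dvd_cancel1[OF q1pos] by blast
  qed
  define S where "S = (\<lambda>c. g ^ ((q+1)*c)) ` {..<q-1}"
  have KS: "K - {0} \<subseteq> S"
  proof
    fix x assume x: "x \<in> K - {0}"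
    then obtain i where i: "x = g ^ i" using gen by blast
    hence "(q+1) dvd i" using Kfwd x by simp
    hence "(q+1) dvd i mod N" using qN by (rule dvd_mod)
    then obtain c where c: "i mod N = (q+1)*c" by blast
    have "i mod N < N" using Npos by simp
    hence "(q+1)*c < (q+1)*(q-1)" using c Nfac by metis
    hence "c < q - 1" using mult_less_cancel1 by blast
    moreover have "x = g ^ ((q+1)*c)" using i c gmod by metis
    ultimately show "x \<in> S" unfolding S_def by blast
  qed
  have "card S \<le> q - 1" unfolding S_def using card_image_le by (metis card_lessThan finite_lessThan)
  hence KSeq: "K - {0} = S" using KS cardK0 by (intro card_seteq) (auto simp: S_def)
  have Kchar: "\<And>e. g ^ e \<in> K \<longleftrightarrow> (q+1) dvd e"
  proof
    fix e assume "(q+1) dvd e"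
    hence "(q+1) dvd e mod N" using qN by (rule dvd_mod)
    then obtain c where c: "e mod N = (q+1)*c" by blast
    have "e mod N < N" using Npos by simp
    hence "(q+1)*c < (q+1)*(q-1)" using c Nfac by metis
    hence "c < q - 1" using mult_less_cancel1 by blast
    hence "g ^ ((q+1)*c) \<in> S" unfolding S_def by blast
    hence "g ^ (e mod N) \<in> K" using KSeq c by auto
    thus "g ^ e \<in> K" using gmod by metis
  qed (rule Kfwd)
  define m where "m = (if p = 2 then 0 else N div 2)"
  have m1: "g ^ m = -1"
  proof (cases "p = 2")
    case True
    have "of_nat CARD('a) = (0::'a)" by (rule char_card)
    hence "(of_nat p :: 'a) ^ (r * 2) = 0" using assms(3) by (simp add: power_mult)
    hence "(2::'a) = 0" using True by simp
    hence "(-1::'a) = 1" by (metis add.inverse_unique one_add_one)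
    thus ?thesis using True m_def by simp
  next
    case False
    hence oddp: "odd p" using oddp_gen by blast
    hence "odd q" unfolding q_def by simp
    hence "even N" unfolding N_def by simp
    hence NN: "2 * (N div 2) = N" by simp
    let ?y = "g ^ (N div 2)"
    have "?y ^ 2 = 1" using gN NN by (metis power_mult mult.commute)
    moreover have "?y \<noteq> 1"
    proof
      assume "?y = 1"
      hence "g ^ (N div 2) = g ^ 0" by simp
      hence "(N div 2) mod N = 0" using geq[of "N div 2" 0] by simp
      moreover have "N div 2 < N" "N div 2 > 0" using Npos NN by auto
      ultimately show False by simp
    qed
    ultimately have "?y = -1" by (simp add: power2_eq_1_iff)
    thus ?thesis using False m_def by simp
  qed
  have LHS: "(\<forall>x::'a. x ^ (1 + p ^ l) + 1 = 0 \<longrightarrow> x \<in> K) \<longleftrightarrow>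
      (\<forall>e. (e*n) mod N = m mod N \<longrightarrow> (q+1) dvd e)"
  proof
    assume L: "\<forall>x::'a. x ^ (1 + p ^ l) + 1 = 0 \<longrightarrow> x \<in> K"
    show "\<forall>e. (e*n) mod N = m mod N \<longrightarrow> (q+1) dvd e"
    proof (intro allI impI)
      fix e assume "(e*n) mod N = m mod N"
      hence "g ^ (e*n) = g ^ m" using geq[of "e*n" m] by simp
      moreover have "(g ^ e) ^ (1 + p ^ l) = g ^ (e*n)" unfolding n_def by (rule power_mult[symmetric])
      ultimately have "(g ^ e) ^ (1 + p ^ l) = -1" using m1 by simp
      hence "(g ^ e) ^ (1 + p ^ l) + 1 = 0" by simp
      hence "g ^ e \<in> K" using L by blast
      thus "(q+1) dvd e" using Kchar by blast
    qed
  next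
    assume R: "\<forall>e. (e*n) mod N = m mod N \<longrightarrow> (q+1) dvd e"
    show "\<forall>x::'a. x ^ (1 + p ^ l) + 1 = 0 \<longrightarrow> x \<in> K"
    proof (intro allI impI)
      fix x :: 'a assume x: "x ^ (1 + p ^ l) + 1 = 0"
      have "x \<noteq> 0" using x by (cases "x = 0") auto
      then obtain e where e: "x = g ^ e" using gen by blast
      have "x ^ (1 + p ^ l) = -1" using x by (simp add: eq_neg_iff_add_eq_0)
      moreover have "x ^ (1 + p ^ l) = g ^ (e*n)" unfolding n_def e by (rule power_mult[symmetric])
      ultimately have "g ^ (e * n) = g ^ m" using m1 by simp
      hence "(e*n) mod N = m mod N" using geq[of "e*n" m] by simp
      hence "(q+1) dvd e" using R by blast
      thus "x \<in> K" using Kchar e by blast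
    qed
  qed
  show ?thesis
  proof (cases "p = 2")
    case True
    have "even q" unfolding q_def using True rpos by simp
    hence "(\<forall>e. (e*n) mod N = m mod N \<longrightarrow> (q+1) dvd e) \<longleftrightarrow> gcd n (q+1) = 1"
      using nt_even[of q n] q2 True unfolding m_def N_def by simp
    thus ?thesis unfolding LHS using True n_def q_def by (simp add: add.commute)
  next
    case False
    hence oddp: "odd p" using oddp_gen by blast
    have oq: "odd q" unfolding q_def using oddp by simp
    hence q3: "q \<ge> 3" using q2 by (cases "q = 2") auto
    have en: "even n" unfolding n_def using oddp by simp
    have "p ^ (2*r) = q^2" unfolding q_def by (simp add: power_mult[symmetric] mult.commute)
    thus ?thesis unfolding LHS using nt_odd[OF oq q3 en npos] False oddp
      unfolding m_def N_def n_def q_def by (simp add: add.commute)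
  qed
qed


end
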